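(* Let $\Omega\subset\mathbb{C}^n$ be a bounded domain, let $\mathcal R$ and $\mathcal R'$ be quasi-free Hilbert modules of rank $m$, $1\le m<\infty$, over $A(\Omega)$ with generating sets $\{f_i\}_{i=1}^m$ and $\{g_i\}_{i=1}^m$, and let $\delta=\delta(\mathcal R,\mathcal R')$. For each $z\in\Omega$, the map $\delta\otimes_{A(\Omega)}1_z:\mathcal R\otimes_{A(\Omega)}\mathbb C_z\to\mathcal R'\otimes_{A(\Omega)}\mathbb C_z$, $h\otimes 1_z\mapsto \delta h\otimes1_z$ ($h$ in the domain of $\delta$), is well-defined. Moreover, $\delta\otimes_{A(\Omega)}1_z$ is an invertible operator between these $m$-dimensional Hilbert spaces.
   Context: $A(\Omega)$ is the closure, in the supremum norm on $\Omega$, of the set of functions holomorphic on some neighbourhood of $\overline\Omega$; $\ell^2_m$ is the $m$-dimensional Hilbert space. A quasi-free Hilbert module of rank $m$ over $A(\Omega)$ is a Hilbert space $\mathcal R$ obtained as the completion of $A(\Omega)\otimes\ell^2_m$ (regarded as $\ell^2_m$-valued holomorphic functions on $\Omega$) with respect to an inner product such that: (1) for each $z\in\Omega$ evaluation at $z$ is bounded, with norm locally uniformly bounded in $z$; (2) $\|\varphi F\|_{\mathcal R}\le\|\varphi\|_{A(\Omega)}\|F\|_{\mathcal R}$; (3) if $(F_i)$ is Cauchy in $\mathcal R$-norm, then $F_i(z)\to0$ for all $z$ iff $\|F_i\|_{\mathcal R}\to0$. $A(\Omega)$ acts by multiplication. For $z\in\Omega$, $\mathbb C_z$ is $\mathbb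 C$ with action $\varphi\cdot\lambda=\varphi(z)\lambda$; the localization $\mathcal R\otimes_{A(\Omega)}\mathbb C_z$ is identified with $\mathcal R/\mathcal R_z$, where $\mathcal R_z$ is the closure of $A(\Omega)_z\mathcal R$, $A(\Omega)_z=\{\varphi\in A(\Omega):\varphi(z)=0\}$; $h\otimes1_z$ is the class of $h$. A generating set is $\{f_1,\dots,f_m\}\subset\mathcal R$ whose $A(\Omega)$-multiples span a dense subspace and with $\{f_i\otimes1_z\}$ a basis of $\mathcal R\otimes_{A(\Omega)}\mathbb C_z$ for each $z$. $\delta(\mathcal R,\mathcal R')$ is the closed, densely defined, one-to-one module transformation with dense range whose graph is the closure in $\mathcal R\oplus\mathcal R'$ of the span of $\{\varphi f_i\oplus\varphi g_i:\varphi\in A(\Omega),1\le i\le m\}$. *)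

theory Defs
  imports "HOL-Analysis.Analysis"
begin

text \<open>Points of C^n are vectors of type complex^'n; elements of
l2_m are vectors of type complex^'m (Euclidean norm). Functions on Omega are
represented as total functions that vanish outside Omega.\<close>

type_synonym ('n,'m) vfun = "complex^('n::finite) \<Rightarrow> complex^('m::finite)"

definition fadd :: "('n::finite,'m::finite) vfun \<Rightarrow> ('n::finite,'m::finite) vfun \<Rightarrow> ('n::finite,'m::finite) vfun" where
  "fadd F G = (\<lambda>w. F w + G w)"

definition fsub :: "('n::finite,'m::finite) vfun \<Rightarrow> ('n::finite,'m::finite) vfun \<Rightarrow> ('n::finite,'m::finite) vfun" where
  "fsub F G = (\<lambda>w. F w - G w)"

definition fscale :: "complex \<Rightarrow> ('n::finite,'m::finite) vfun \<Rightarrow> ('n::finite,'m::finite) vfun" where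
  "fscale c F = (\<lambda>w. c *s F w)"

definition fmul :: "(complex^'n \<Rightarrow> complex) \<Rightarrow> ('n::finite,'m::finite) vfun \<Rightarrow> ('n::finite,'m::finite) vfun" where
  "fmul \<phi> F = (\<lambda>w. \<phi> w *s F w)"

definition hol_on :: "(complex^'n) set \<Rightarrow> (complex^'n \<Rightarrow> complex) \<Rightarrow> bool" where
  "hol_on U f \<longleftrightarrow> open U \<and>
     (\<forall>z\<in>U. \<exists>L. (f has_derivative L) (at z) \<and> (\<forall>c x. L (c *s x) = c * L x))"

definition AOm :: "(complex^'n) set \<Rightarrow> (complex^'n \<Rightarrow> complex) set" where
  "AOm \<Omega> = {\<phi>. (\<forall>w. w \<notin> \<Omega> \<longrightarrow> \<phi> w = 0) \<and>
      (\<forall>\<epsilon>>0. \<exists>U g. open U \<and> closure \<Omega> \<subseteq> U \<and> hol_on U g \<and>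
                  (\<forall>w\<in>\<Omega>. cmod (\<phi> w - g w) \<le> \<epsilon>))}"

definition supnorm :: "(complex^'n) set \<Rightarrow> (complex^'n \<Rightarrow> complex) \<Rightarrow> real" where
  "supnorm \<Omega> \<phi> = (SUP w\<in>\<Omega>. cmod (\<phi> w))"

text \<open>A(Omega) tensor l2_m, viewed as l2_m-valued functions.\<close>
definition tensorA :: "(complex^'n) set \<Rightarrow> ('n::finite,'m::finite) vfun set" where
  "tensorA \<Omega> = {F. \<forall>i. (\<lambda>w. F w $ i) \<in> AOm \<Omega>}"

definition fspan :: "('n::finite,'m::finite) vfun set \<Rightarrow> ('n::finite,'m::finite) vfun set" where
  "fspan S = \<Inter>{V. S \<subseteq> V \<and> (\<lambda>w. 0) \<in> V \<and> (\<forall>F\<in>V. \<forall>G\<in>V. fadd F G \<in> V)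
                  \<and> (\<forall>c. \<forall>F\<in>V. fscale c F \<in> V)}"

definition pspan :: "(('n::finite,'m::finite) vfun \<times> ('n::finite,'m::finite) vfun) set \<Rightarrow> (('n::finite,'m::finite) vfun \<times> ('n::finite,'m::finite) vfun) set" where
  "pspan S = \<Inter>{V. S \<subseteq> V \<and> ((\<lambda>w. 0), (\<lambda>w. 0)) \<in> V
                  \<and> (\<forall>(F,G)\<in>V. \<forall>(F',G')\<in>V. (fadd F F', fadd G G') \<in> V)
                  \<and> (\<forall>c. \<forall>(F,G)\<in>V. (fscale c F, fscale c G) \<in> V)}"

type_synonym ('n,'m) ipr = "('n::finite,'m::finite) vfun \<Rightarrow> ('n::finite,'m::finite) vfun \<Rightarrow> complex"

definition hnorm :: "('n::finite,'m::finite) ipr \<Rightarrow> ('n::finite,'m::finite) vfun \<Rightarrow> real" where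
  "hnorm ip F = sqrt (Re (ip F F))"

definition hcauchy :: "('n::finite,'m::finite) ipr \<Rightarrow> (nat \<Rightarrow> ('n::finite,'m::finite) vfun) \<Rightarrow> bool" where
  "hcauchy ip X \<longleftrightarrow> (\<forall>\<epsilon>>0. \<exists>N. \<forall>k\<ge>N. \<forall>l\<ge>N. hnorm ip (fsub (X k) (X l)) < \<epsilon>)"

definition hclosure :: "('n::finite,'m::finite) vfun set \<Rightarrow> ('n::finite,'m::finite) ipr \<Rightarrow> ('n::finite,'m::finite) vfun set \<Rightarrow> ('n::finite,'m::finite) vfun set" where
  "hclosure R ip S = {F\<in>R. \<forall>\<epsilon>>0. \<exists>G\<in>S. hnorm ip (fsub F G) < \<epsilon>}"

definition quasi_free :: "(complex^'n) set \<Rightarrow> ('n::finite,'m::finite) vfun set \<Rightarrow> ('n::finite,'m::finite) ipr \<Rightarrow> bool" where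
  "quasi_free \<Omega> R ip \<longleftrightarrow>
     \<comment> \<open>functions on Omega; complex vector space\<close>
     (\<forall>F\<in>R. \<forall>w. w \<notin> \<Omega> \<longrightarrow> F w = 0) \<and>
     (\<lambda>w. 0) \<in> R \<and> (\<forall>F\<in>R. \<forall>G\<in>R. fadd F G \<in> R) \<and> (\<forall>c. \<forall>F\<in>R. fscale c F \<in> R) \<and>
     \<comment> \<open>inner product\<close>
     (\<forall>F\<in>R. \<forall>G\<in>R. \<forall>H\<in>R. ip (fadd F G) H = ip F H + ip G H) \<and>
     (\<forall>c. \<forall>F\<in>R. \<forall>G\<in>R. ip (fscale c F) G = c * ip F G) \<and>
     (\<forall>F\<in>R. \<forall>G\<in>R. ip G F = cnj (ip F G)) \<and>
     (\<forall>F\<in>R. Im (ip F F) = 0 \<and> Re (ip F F) \<ge> 0) \<and>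
     (\<forall>F\<in>R. ip F F = 0 \<longrightarrow> F = (\<lambda>w. 0)) \<and>
     \<comment> \<open>completeness\<close>
     (\<forall>X. range X \<subseteq> R \<and> hcauchy ip X \<longrightarrow>
          (\<exists>L\<in>R. (\<lambda>k. hnorm ip (fsub (X k) L)) \<longlonglongrightarrow> 0)) \<and>
     \<comment> \<open>completion of A(Omega) tensor l2_m\<close>
     tensorA \<Omega> \<subseteq> R \<and> hclosure R ip (tensorA \<Omega>) = R \<and>
     \<comment> \<open>(1) bounded evaluation, locally uniformly\<close>
     (\<forall>z\<in>\<Omega>. \<exists>r>0. \<exists>C. \<forall>w\<in>ball z r. \<forall>F\<in>R. norm (F w) \<le> C * hnorm ip F) \<and>
     \<comment> \<open>(2) contractive module action\<close>
     (\<forall>\<phi>\<in>AOm \<Omega>. \<forall>F\<in>R. fmul \<phi> F \<in> R \<and> hnorm ip (fmul \<phi> F) \<le> supnorm \<Omega> \<phi> * hnorm ip F) \<and>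
     \<comment> \<open>(3)\<close>
     (\<forall>X. range X \<subseteq> R \<and> hcauchy ip X \<longrightarrow>
          ((\<forall>w. (\<lambda>k. X k w) \<longlonglongrightarrow> 0) \<longleftrightarrow> (\<lambda>k. hnorm ip (X k)) \<longlonglongrightarrow> 0))"

text \<open>R_z: closure of A(Omega)_z R; the localization R tensor C_z is R / R_z.\<close>
definition locsub :: "(complex^'n) set \<Rightarrow> ('n::finite,'m::finite) vfun set \<Rightarrow> ('n::finite,'m::finite) ipr \<Rightarrow> complex^'n \<Rightarrow> ('n::finite,'m::finite) vfun set" where
  "locsub \<Omega> R ip z = hclosure R ip (fspan {fmul \<phi> F | \<phi> F. \<phi> \<in> AOm \<Omega> \<and> \<phi> z = 0 \<and> F \<in> R})"

text \<open>Quotient norm of the class h tensor 1_z in R / R_z.\<close>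
definition qnorm :: "('n::finite,'m::finite) ipr \<Rightarrow> ('n::finite,'m::finite) vfun set \<Rightarrow> ('n::finite,'m::finite) vfun \<Rightarrow> real" where
  "qnorm ip S h = Inf {hnorm ip (fsub h r) | r. r \<in> S}"

definition gen_set :: "(complex^'n) set \<Rightarrow> ('n::finite,'m::finite) vfun set \<Rightarrow> ('n::finite,'m::finite) ipr \<Rightarrow> ('m::finite \<Rightarrow> ('n::finite,'m::finite) vfun) \<Rightarrow> bool" where
  "gen_set \<Omega> R ip f \<longleftrightarrow>
     (\<forall>i. f i \<in> R) \<and>
     hclosure R ip (fspan {fmul \<phi> (f i) | \<phi> i. \<phi> \<in> AOm \<Omega>}) = R \<and>
     (\<forall>z\<in>\<Omega>.
        (\<forall>h\<in>R. \<exists>c. fsub h (\<lambda>w. \<Sum>i\<in>UNIV. c i *s f i w) \<in> locsub \<Omega> R ip z) \<and>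
        (\<forall>c. (\<lambda>w. \<Sum>i\<in>UNIV. c i *s f i w) \<in> locsub \<Omega> R ip z \<longrightarrow> (\<forall>i. c i = 0)))"

definition delta_graph :: "(complex^'n) set \<Rightarrow> ('n::finite,'m::finite) vfun set \<Rightarrow> ('n::finite,'m::finite) ipr \<Rightarrow>
     ('n::finite,'m::finite) vfun set \<Rightarrow> ('n::finite,'m::finite) ipr \<Rightarrow> ('m::finite \<Rightarrow> ('n::finite,'m::finite) vfun) \<Rightarrow> ('m \<Rightarrow> ('n::finite,'m::finite) vfun)
     \<Rightarrow> (('n::finite,'m::finite) vfun \<times> ('n::finite,'m::finite) vfun) set" where
  "delta_graph \<Omega> R ip R' ip' f g =
     {(F,G). F \<in> R \<and> G \<in> R' \<and>
        (\<forall>\<epsilon>>0. \<exists>(F0,G0)\<in>pspan {(fmul \<phi> (f i), fmul \<phi> (g i)) | \<phi> i. \<phi> \<in> AOm \<Omega>}.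
            sqrt ((hnorm ip (fsub F F0))\<^sup>2 + (hnorm ip' (fsub G G0))\<^sup>2) < \<epsilon>)}"

end

theory Submission
  imports Defs
begin


lemma real_disc:
  fixes a b p :: real
  assumes "\<And>t. 0 \<le> a + 2*t*p + t^2*b" "a \<ge> 0" "b \<ge> 0"
  shows "p \<le> sqrt a * sqrt b"
proof (cases "p \<le> 0")
  case True
  have "0 \<le> sqrt a * sqrt b" using assms by simp
  then show ?thesis using True by linarith
next
  case False
  show ?thesis
  proof (cases "b = 0")
    case True
    have "0 \<le> a + 2*(-(a+1)/(2*p))*p" using assms(1)[of "-(a+1)/(2*p)"] True by simp
    then show ?thesis using False by (simp add: field_simps)
  next
    case b: False
    then have bp: "b > 0" using assms by simp
    have "0 \<le> a + 2*(-p/b)*p + (-p/b)^2*b" using assms(1) by blast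
    also have "\<dots> = a - p^2/b" using bp by (simp add: field_simps power2_eq_square)
    finally have "p^2 \<le> a*b" using bp by (simp add: field_simps)
    then have "p \<le> sqrt (a*b)" by (rule real_le_rsqrt)
    then show ?thesis by (simp add: real_sqrt_mult)
  qed
qed

lemma fsimps: "fadd F G w = F w + G w" "fsub F G w = F w - G w" "fscale c F w = c *s F w"
  "fmul \<phi> F w = \<phi> w *s F w"
  by (simp_all add: fadd_def fsub_def fscale_def fmul_def)

locale hs =
  fixes R :: "(complex^'n::finite \<Rightarrow> complex^'m::finite) set"
    and ip :: "(complex^'n \<Rightarrow> complex^'m) \<Rightarrow> (complex^'n \<Rightarrow> complex^'m) \<Rightarrow> complex"
  assumes z: "(\<lambda>w. 0) \<in> R"
    and ad: "\<And>F G. F \<in> R \<Longrightarrow> G \<in> R \<Longrightarrow> fadd F G \<in> R"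
    and sc: "\<And>c F. F \<in> R \<Longrightarrow> fscale c F \<in> R"
    and ipadd: "\<And>F G H. F\<in>R \<Longrightarrow> G\<in>R \<Longrightarrow> H\<in>R \<Longrightarrow> ip (fadd F G) H = ip F H + ip G H"
    and ipsc: "\<And>c F G. F\<in>R \<Longrightarrow> G\<in>R \<Longrightarrow> ip (fscale c F) G = c * ip F G"
    and ipsym: "\<And>F G. F\<in>R \<Longrightarrow> G\<in>R \<Longrightarrow> ip G F = cnj (ip F G)"
    and ippos: "\<And>F. F\<in>R \<Longrightarrow> Im (ip F F) = 0 \<and> Re (ip F F) \<ge> 0"
begin

lemma sub: "F \<in> R \<Longrightarrow> G \<in> R \<Longrightarrow> fsub F G \<in> R"
proof -
  assume "F \<in> R" "G \<in> R"
  then have "fadd F (fscale (-1) G) \<in> R" by (simp add: ad sc)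
  moreover have "fadd F (fscale (-1) G) = fsub F G"
    by (rule ext) (simp add: fsimps vec_eq_iff)
  ultimately show ?thesis by simp
qed

lemma ipadd2: "F\<in>R \<Longrightarrow> G\<in>R \<Longrightarrow> H\<in>R \<Longrightarrow> ip H (fadd F G) = ip H F + ip H G"
proof -
  assume a: "F\<in>R" "G\<in>R" "H\<in>R"
  have "ip H (fadd F G) = cnj (ip (fadd F G) H)" using ipsym[of "fadd F G" H] a ad by simp
  also have "\<dots> = cnj (ip F H) + cnj (ip G H)" using ipadd a by simp
  also have "\<dots> = ip H F + ip H G" using ipsym[of F H] ipsym[of G H] a by simp
  finally show ?thesis .
qed

lemma ipsc2: "F\<in>R \<Longrightarrow> G\<in>R \<Longrightarrow> ip F (fscale c G) = cnj c * ip F G"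
proof -
  assume a: "F\<in>R" "G\<in>R"
  have "ip F (fscale c G) = cnj (ip (fscale c G) F)" using ipsym[of "fscale c G" F] a sc by simp
  also have "\<dots> = cnj c * cnj (ip G F)" using ipsc a by simp
  also have "\<dots> = cnj c * ip F G" using ipsym[of F G] a by simp
  finally show ?thesis .
qed

lemma hn_nonneg: "F \<in> R \<Longrightarrow> hnorm ip F \<ge> 0"
  using ippos by (simp add: hnorm_def)

lemma hn_sq: "F \<in> R \<Longrightarrow> (hnorm ip F)^2 = Re (ip F F)"
  using ippos by (simp add: hnorm_def)

lemma ipreal: "F \<in> R \<Longrightarrow> ip F F = of_real (Re (ip F F))"
  using ippos[of F] by (simp add: complex_eq_iff)

lemma hn_zero: "hnorm ip (\<lambda>w. 0) = 0"
proof -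
  have "fscale 0 (\<lambda>w. 0) = ((\<lambda>w. 0) :: complex^'n \<Rightarrow> complex^'m)" by (rule ext) (simp add: fsimps)
  then have "ip (\<lambda>w. 0) (\<lambda>w. 0) = ip (fscale 0 (\<lambda>w. 0)) (\<lambda>w. 0)" by simp
  also have "\<dots> = 0" using ipsc[OF z z, of 0] by simp
  finally show ?thesis by (simp add: hnorm_def)
qed

lemma hn_scale: "F \<in> R \<Longrightarrow> hnorm ip (fscale c F) = cmod c * hnorm ip F"
proof -
  assume F: "F \<in> R"
  have "ip (fscale c F) (fscale c F) = c * (cnj c * ip F F)"
    using F by (simp add: ipsc sc ipsc2)
  also have "\<dots> = (c * cnj c) * of_real (Re (ip F F))" using ipreal[OF F] by simp
  also have "\<dots> = of_real ((cmod c)^2 * Re (ip F F))" by (simp add: complex_norm_square[symmetric])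
  finally have "Re (ip (fscale c F) (fscale c F)) = (cmod c)^2 * Re (ip F F)" by simp
  then show ?thesis by (simp add: hnorm_def real_sqrt_mult)
qed

lemma cs: "F \<in> R \<Longrightarrow> G \<in> R \<Longrightarrow> Re (ip F G) \<le> hnorm ip F * hnorm ip G"
proof -
  assume F: "F \<in> R" and G: "G \<in> R"
  have "\<And>t. 0 \<le> Re (ip F F) + 2*t*Re (ip F G) + t^2 * Re (ip G G)"
  proof -
    fix t :: real
    let ?X = "fadd F (fscale (of_real t) G)"
    have X: "?X \<in> R" using F G by (simp add: ad sc)
    have S: "fscale (of_real t) G \<in> R" using G sc by simp
    have "ip ?X ?X = ip F ?X + ip (fscale (of_real t) G) ?X" using ipadd[OF F S X] .
    also have "ip F ?X = ip F F + of_real t * ip F G" using ipadd2[OF F S F] ipsc2[OF F G] by simp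
    also have "ip (fscale (of_real t) G) ?X = of_real t * (ip G F + of_real t * ip G G)"
      using ipsc[OF G X] ipadd2[OF F S G] ipsc2[OF G G] by simp
    finally have "ip ?X ?X = ip F F + of_real t * ip F G + of_real t * ip G F + (of_real t * of_real t) * ip G G"
      by (simp add: algebra_simps)
    then have "Re (ip ?X ?X) = Re (ip F F) + 2*t*Re (ip F G) + t^2 * Re (ip G G)"
      using ipsym[OF F G] by (simp add: power2_eq_square)
    then show "0 \<le> Re (ip F F) + 2*t*Re (ip F G) + t^2 * Re (ip G G)" using ippos[OF X] by simp
  qed
  then show ?thesis using real_disc ippos F G by (simp add: hnorm_def)
qed

lemma tri: "F \<in> R \<Longrightarrow> G \<in> R \<Longrightarrow> hnorm ip (fadd F G) \<le> hnorm ip F + hnorm ip G"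
proof -
  assume F: "F \<in> R" and G: "G \<in> R"
  have "ip (fadd F G) (fadd F G) = ip F F + ip F G + ip G F + ip G G"
    using F G by (simp add: ipadd ipadd2 ad)
  then have "Re (ip (fadd F G) (fadd F G)) = Re (ip F F) + 2 * Re (ip F G) + Re (ip G G)"
    using ipsym[OF F G] by simp
  also have "\<dots> \<le> (hnorm ip F)^2 + 2 * (hnorm ip F * hnorm ip G) + (hnorm ip G)^2"
    using cs[OF F G] hn_sq[OF F] hn_sq[OF G] by simp
  also have "\<dots> = (hnorm ip F + hnorm ip G)^2" by (simp add: power2_eq_square algebra_simps)
  finally show ?thesis unfolding hnorm_def[of ip "fadd F G"]
    by (rule real_le_lsqrt[rotated]) (simp add: F G hn_nonneg)
qed

lemma fsub_split: "fsub F H = fadd (fsub F G) (fsub G H)"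
  by (rule ext) (simp add: fsimps)

lemma tri2: "F \<in> R \<Longrightarrow> G \<in> R \<Longrightarrow> H \<in> R \<Longrightarrow> hnorm ip (fsub F H) \<le> hnorm ip (fsub F G) + hnorm ip (fsub G H)"
  using tri[of "fsub F G" "fsub G H"] by (simp add: sub flip: fsub_split)

lemma hn_symm: "F \<in> R \<Longrightarrow> G \<in> R \<Longrightarrow> hnorm ip (fsub F G) = hnorm ip (fsub G F)"
proof -
  assume F: "F \<in> R" and G: "G \<in> R"
  have "fsub G F = fscale (-1) (fsub F G)" by (rule ext) (simp add: fsimps vec_eq_iff)
  then show ?thesis using hn_scale[OF sub[OF F G], of "-1"] by simp
qed

lemma hn_sum: "finite A \<Longrightarrow> (\<forall>i\<in>A. F i \<in> R) \<Longrightarrow>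
   (\<lambda>w. \<Sum>i\<in>A. c i *s F i w) \<in> R \<and> hnorm ip (\<lambda>w. \<Sum>i\<in>A. c i *s F i w) \<le> (\<Sum>i\<in>A. cmod (c i) * hnorm ip (F i))"
proof (induction A rule: finite_induct)
  case empty then show ?case by (simp add: z hn_zero)
next
  case (insert a A)
  have eq: "(\<lambda>w. \<Sum>i\<in>insert a A. c i *s F i w) = fadd (fscale (c a) (F a)) (\<lambda>w. \<Sum>i\<in>A. c i *s F i w)"
    using insert by (intro ext) (simp add: fsimps)
  have Fa: "F a \<in> R" using insert by simp
  show ?case unfolding eq using insert tri[OF sc[OF Fa, of "c a"], of "(\<lambda>w. \<Sum>i\<in>A. c i *s F i w)"]
    by (simp add: ad sc hn_scale Fa)
qed

end



definition subsp :: "('n::finite,'m::finite) vfun set \<Rightarrow> ('n,'m) vfun set \<Rightarrow> bool" where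
  "subsp R S \<longleftrightarrow> S \<subseteq> R \<and> (\<lambda>w. 0) \<in> S \<and> (\<forall>F\<in>S. \<forall>G\<in>S. fadd F G \<in> S) \<and> (\<forall>c. \<forall>F\<in>S. fscale c F \<in> S)"

definition vs :: "('m::finite \<Rightarrow> ('n::finite,'m) vfun) \<Rightarrow> complex^'m \<Rightarrow> ('n,'m) vfun" where
  "vs f c = (\<lambda>w. \<Sum>i\<in>UNIV. c$i *s f i w)"

lemma subsp_sub: "subsp R S \<Longrightarrow> F \<in> S \<Longrightarrow> G \<in> S \<Longrightarrow> fsub F G \<in> S"
proof -
  assume a: "subsp R S" "F \<in> S" "G \<in> S"
  then have "fadd F (fscale (-1) G) \<in> S" unfolding subsp_def by blast
  moreover have "fadd F (fscale (-1) G) = fsub F G"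
    by (rule ext) (simp add: fsimps vec_eq_iff)
  ultimately show ?thesis by simp
qed

lemma subsp_neg: "subsp R S \<Longrightarrow> fsub F G \<in> S \<Longrightarrow> fsub G F \<in> S"
proof -
  assume a: "subsp R S" "fsub F G \<in> S"
  then have "fscale (-1) (fsub F G) \<in> S" unfolding subsp_def by blast
  moreover have "fscale (-1) (fsub F G) = fsub G F"
    by (rule ext) (simp add: fsimps vec_eq_iff)
  ultimately show ?thesis by simp
qed

definition spc :: "('n::finite,'m::finite) vfun set \<Rightarrow> ('n,'m) vfun set \<Rightarrow> bool" where
  "spc S0 V \<longleftrightarrow> S0 \<subseteq> V \<and> (\<lambda>w. 0) \<in> V \<and> (\<forall>F\<in>V. \<forall>G\<in>V. fadd F G \<in> V)
                  \<and> (\<forall>c. \<forall>F\<in>V. fscale c F \<in> V)"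

lemma fspan_iff: "x \<in> fspan S0 \<longleftrightarrow> (\<forall>V. spc S0 V \<longrightarrow> x \<in> V)"
  unfolding fspan_def spc_def by simp

context hs begin

lemma R_subsp: "subsp R R" using z ad sc by (simp add: subsp_def)

lemma span_subsp: "S0 \<subseteq> R \<Longrightarrow> subsp R (fspan S0) \<and> S0 \<subseteq> fspan S0"
proof -
  assume S0: "S0 \<subseteq> R"
  have sR: "spc S0 R" unfolding spc_def using S0 z ad sc by simp
  have 1: "fspan S0 \<subseteq> R"
  proof
    fix x assume "x \<in> fspan S0"
    then show "x \<in> R" unfolding fspan_iff using sR by simp
  qed
  have 2: "(\<lambda>w. 0) \<in> fspan S0" unfolding fspan_iff spc_def by simp
  have 3: "fadd F G \<in> fspan S0" if a: "F \<in> fspan S0" "G \<in> fspan S0" for F G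
    unfolding fspan_iff
  proof (intro allI impI)
    fix V assume V: "spc S0 V"
    then have "F \<in> V" "G \<in> V" using a unfolding fspan_iff by simp_all
    then show "fadd F G \<in> V" using V unfolding spc_def by simp
  qed
  have 4: "fscale c F \<in> fspan S0" if a: "F \<in> fspan S0" for F c
    unfolding fspan_iff
  proof (intro allI impI)
    fix V assume V: "spc S0 V"
    then have "F \<in> V" using a unfolding fspan_iff by simp_all
    then show "fscale c F \<in> V" using V unfolding spc_def by simp
  qed
  have 5: "S0 \<subseteq> fspan S0"
  proof
    fix x assume "x \<in> S0" then show "x \<in> fspan S0" unfolding fspan_iff spc_def by blast
  qed
  show ?thesis unfolding subsp_def using 1 2 3 4 5 by simp
qed

lemma hcl_sub: "subsp R S \<Longrightarrow> S \<subseteq> hclosure R ip S"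
proof
  fix F assume a: "subsp R S" "F \<in> S"
  have "fsub F F = (\<lambda>w. 0)" by (rule ext) (simp add: fsimps)
  then have "hnorm ip (fsub F F) = 0" using hn_zero by simp
  moreover have "F \<in> R" using a by (auto simp: subsp_def)
  ultimately show "F \<in> hclosure R ip S" using a(2) unfolding hclosure_def by force
qed

lemma hcl_R: "hclosure R ip S \<subseteq> R" unfolding hclosure_def by auto

lemma hcl_subsp: assumes S: "subsp R S" shows "subsp R (hclosure R ip S)"
proof -
  have SR: "S \<subseteq> R" using S by (simp add: subsp_def)
  have z: "(\<lambda>w. 0) \<in> hclosure R ip S" using hcl_sub[OF S] S by (auto simp: subsp_def)
  have add: "fadd F G \<in> hclosure R ip S" if F: "F \<in> hclosure R ip S" and G: "G \<in> hclosure R ip S" for F G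
  proof -
    have "F \<in> R" "G \<in> R" using F G by (auto simp: hclosure_def)
    moreover have "\<exists>H\<in>S. hnorm ip (fsub (fadd F G) H) < e" if e: "e > 0" for e
    proof -
      have e2: "e/2 > 0" using e by simp
      obtain F0 where F0: "F0 \<in> S" "hnorm ip (fsub F F0) < e/2" using F e2 unfolding hclosure_def
        by blast
      obtain G0 where G0: "G0 \<in> S" "hnorm ip (fsub G G0) < e/2" using G e2 unfolding hclosure_def
        by blast
      have eq: "fsub (fadd F G) (fadd F0 G0) = fadd (fsub F F0) (fsub G G0)"
        by (rule ext) (simp add: fsimps)
      have "hnorm ip (fsub (fadd F G) (fadd F0 G0)) \<le> hnorm ip (fsub F F0) + hnorm ip (fsub G G0)"
        unfolding eq using F0 G0 SR \<open>F \<in> R\<close> \<open>G \<in> R\<close> by (intro tri sub) auto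
      moreover have "fadd F0 G0 \<in> S" using S F0 G0 by (simp add: subsp_def)
      ultimately show ?thesis using F0 G0 by (intro bexI[of _ "fadd F0 G0"]) linarith+
    qed
    ultimately show ?thesis unfolding hclosure_def by (simp add: ad)
  qed
  have scl: "fscale c F \<in> hclosure R ip S" if F: "F \<in> hclosure R ip S" for F c
  proof -
    have FR: "F \<in> R" using F by (auto simp: hclosure_def)
    moreover have "\<exists>H\<in>S. hnorm ip (fsub (fscale c F) H) < e" if e: "e > 0" for e
    proof -
      have ce: "e / (cmod c + 1) > 0" using e by (intro divide_pos_pos) (auto intro: add_nonneg_pos)
      obtain F0 where F0: "F0 \<in> S" "hnorm ip (fsub F F0) < e / (cmod c + 1)" using F ce unfolding hclosure_def
        by blast
      have eq: "fsub (fscale c F) (fscale c F0) = fscale c (fsub F F0)"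
        by (rule ext) (simp add: fsimps vec_eq_iff algebra_simps)
      have F0R: "F0 \<in> R" using F0 SR by auto
      have "hnorm ip (fsub (fscale c F) (fscale c F0)) = cmod c * hnorm ip (fsub F F0)"
        unfolding eq using FR F0R by (simp add: hn_scale sub)
      also have "\<dots> \<le> (cmod c + 1) * hnorm ip (fsub F F0)"
        using hn_nonneg[OF sub[OF FR F0R]] by (simp add: mult_right_mono)
      also have "\<dots> < e" using F0(2) by (simp add: field_simps add_pos_nonneg)
      finally have "hnorm ip (fsub (fscale c F) (fscale c F0)) < e" .
      moreover have "fscale c F0 \<in> S" using S F0 by (simp add: subsp_def)
      ultimately show ?thesis by blast
    qed
    ultimately show ?thesis unfolding hclosure_def by (simp add: sc)
  qed
  show ?thesis using z add scl hcl_R by (auto simp: subsp_def)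
qed

lemma hcl_closed:
  assumes S: "subsp R S" and F: "F \<in> R"
    and a: "\<And>e. e > 0 \<Longrightarrow> \<exists>r\<in>hclosure R ip S. hnorm ip (fsub F r) < e"
  shows "F \<in> hclosure R ip S"
proof -
  have SR: "S \<subseteq> R" using S by (simp add: subsp_def)
  have "\<exists>G\<in>S. hnorm ip (fsub F G) < e" if e: "e > 0" for e
  proof -
    have e2: "e/2 > 0" using e by simp
    obtain r where r: "r \<in> hclosure R ip S" "hnorm ip (fsub F r) < e/2" using a e2 by blast
    obtain G where G: "G \<in> S" "hnorm ip (fsub r G) < e/2" using r(1) e2 unfolding hclosure_def
      by blast
    have "r \<in> R" using r by (auto simp: hclosure_def)
    then have "hnorm ip (fsub F G) \<le> hnorm ip (fsub F r) + hnorm ip (fsub r G)"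
      using F G SR by (intro tri2) auto
    then show ?thesis using r G by (intro bexI[of _ G]) linarith+
  qed
  then show ?thesis using F unfolding hclosure_def by auto
qed

end


context hs begin

lemma q_set_ne: "subsp R L \<Longrightarrow> {hnorm ip (fsub h r) | r. r \<in> L} \<noteq> {}"
  by (auto simp: subsp_def)

lemma q_lb: "subsp R L \<Longrightarrow> h \<in> R \<Longrightarrow> t \<in> {hnorm ip (fsub h r) | r. r \<in> L} \<Longrightarrow> 0 \<le> t"
proof -
  assume a: "subsp R L" "h \<in> R" "t \<in> {hnorm ip (fsub h r) | r. r \<in> L}"
  then obtain r where r: "r \<in> L" "t = hnorm ip (fsub h r)" by blast
  have "r \<in> R" using a(1) r(1) by (auto simp: subsp_def)
  then show ?thesis using r a(2) hn_nonneg sub by simp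
qed

lemma q_bdd: "subsp R L \<Longrightarrow> h \<in> R \<Longrightarrow> bdd_below {hnorm ip (fsub h r) | r. r \<in> L}"
  unfolding bdd_below_def using q_lb by blast

lemma q_nonneg: "subsp R L \<Longrightarrow> h \<in> R \<Longrightarrow> 0 \<le> qnorm ip L h"
  unfolding qnorm_def using q_set_ne q_lb
  by (intro cInf_greatest) blast+

lemma q_le: "subsp R L \<Longrightarrow> h \<in> R \<Longrightarrow> r \<in> L \<Longrightarrow> qnorm ip L h \<le> hnorm ip (fsub h r)"
  unfolding qnorm_def by (rule cInf_lower) (blast, rule q_bdd)

lemma q_le0: "subsp R L \<Longrightarrow> h \<in> R \<Longrightarrow> qnorm ip L h \<le> hnorm ip h"
proof -
  assume a: "subsp R L" "h \<in> R"
  have "fsub h (\<lambda>w. 0) = h" by (rule ext) (simp add: fsimps)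
  then show ?thesis using q_le[OF a, of "\<lambda>w. 0"] a by (simp add: subsp_def)
qed

lemma q_lip: assumes L: "subsp R L" and x: "x \<in> R" and y: "y \<in> R"
  shows "qnorm ip L x \<le> qnorm ip L y + hnorm ip (fsub x y)"
proof -
  have "qnorm ip L x - hnorm ip (fsub x y) \<le> qnorm ip L y"
    unfolding qnorm_def[of ip L y]
  proof (rule cInf_greatest)
    show "{hnorm ip (fsub y r) | r. r \<in> L} \<noteq> {}" using q_set_ne[OF L] by auto
    fix t assume "t \<in> {hnorm ip (fsub y r) | r. r \<in> L}"
    then obtain r where r: "r \<in> L" "t = hnorm ip (fsub y r)" by auto
    have rR: "r \<in> R" using r L by (auto simp: subsp_def)
    have "qnorm ip L x \<le> hnorm ip (fsub x r)" using q_le[OF L x r(1)] .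
    also have "\<dots> \<le> hnorm ip (fsub x y) + hnorm ip (fsub y r)" using tri2 x y rR by blast
    finally show "qnorm ip L x - hnorm ip (fsub x y) \<le> t" using r by simp
  qed
  then show ?thesis by simp
qed

lemma q_shift1: assumes L: "subsp R L" and x: "x \<in> R" and y: "y \<in> R" and d: "fsub x y \<in> L"
  shows "qnorm ip L x \<le> qnorm ip L y"
  unfolding qnorm_def[of ip L y]
proof (rule cInf_greatest)
  show "{hnorm ip (fsub y r) | r. r \<in> L} \<noteq> {}" using q_set_ne[OF L] by auto
  fix t assume "t \<in> {hnorm ip (fsub y r) | r. r \<in> L}"
  then obtain r where r: "r \<in> L" "t = hnorm ip (fsub y r)" by auto
  have "fadd (fsub x y) r \<in> L" using L d r by (simp add: subsp_def)
  then have "qnorm ip L x \<le> hnorm ip (fsub x (fadd (fsub x y) r))" by (rule q_le[OF L x])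
  moreover have "fsub x (fadd (fsub x y) r) = fsub y r" by (rule ext) (simp add: fsimps)
  ultimately show "qnorm ip L x \<le> t" using r by simp
qed

lemma q_shift: assumes L: "subsp R L" and x: "x \<in> R" and y: "y \<in> R" and d: "fsub x y \<in> L"
  shows "qnorm ip L x = qnorm ip L y"
  using q_shift1[OF L x y d] q_shift1[OF L y x subsp_neg[OF L d]] by simp

lemma q_scale: assumes L: "subsp R L" and x: "x \<in> R"
  shows "qnorm ip L (fscale c x) \<le> cmod c * qnorm ip L x"
proof (cases "c = 0")
  case True
  have "fsub (fscale c x) (\<lambda>w. 0) = (\<lambda>w. 0)" using True by (intro ext) (simp add: fsimps)
  then have "qnorm ip L (fscale c x) \<le> 0" using q_le[OF L sc[OF x, of c], where r="\<lambda>w. 0"] L hn_zero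
    by (simp add: subsp_def)
  then show ?thesis using True by simp
next
  case False
  have "qnorm ip L (fscale c x) / cmod c \<le> qnorm ip L x"
    unfolding qnorm_def[of ip L x]
  proof (rule cInf_greatest)
    show "{hnorm ip (fsub x r) | r. r \<in> L} \<noteq> {}" using q_set_ne[OF L] by auto
    fix t assume "t \<in> {hnorm ip (fsub x r) | r. r \<in> L}"
    then obtain r where r: "r \<in> L" "t = hnorm ip (fsub x r)" by auto
    have rR: "r \<in> R" using r L by (auto simp: subsp_def)
    have "fscale c r \<in> L" using L r by (simp add: subsp_def)
    then have "qnorm ip L (fscale c x) \<le> hnorm ip (fsub (fscale c x) (fscale c r))" by (rule q_le[OF L sc[OF x]])
    moreover have "fsub (fscale c x) (fscale c r) = fscale c (fsub x r)"
      by (rule ext) (simp add: fsimps vec_eq_iff algebra_simps)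
    ultimately have "qnorm ip L (fscale c x) \<le> cmod c * t"
      using hn_scale[OF sub[OF x rR]] r by simp
    then show "qnorm ip L (fscale c x) / cmod c \<le> t" using False by (simp add: field_simps mult.commute)
  qed
  then show ?thesis using False by (simp add: field_simps mult.commute)
qed

lemma q_zero: assumes S: "subsp R S" and x: "x \<in> R" and q: "qnorm ip (hclosure R ip S) x \<le> 0"
  shows "x \<in> hclosure R ip S"
proof (rule hcl_closed[OF S x])
  fix e :: real assume e: "e > 0"
  let ?L = "hclosure R ip S"
  have L: "subsp R ?L" using hcl_subsp[OF S] .
  have ne: "{hnorm ip (fsub x r) | r. r \<in> ?L} \<noteq> {}" by (rule q_set_ne[OF L])
  have "Inf {hnorm ip (fsub x r) | r. r \<in> ?L} < e" using q e unfolding qnorm_def by linarith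
  from cInf_lessD[OF ne this] obtain t where "t \<in> {hnorm ip (fsub x r) | r. r \<in> ?L}" "t < e"
    by blast
  then show "\<exists>r\<in>?L. hnorm ip (fsub x r) < e" by blast
qed

end



lemma vs_diff: "fsub (vs f c) (vs f d) = vs f (c - d)"
  by (rule ext) (simp add: fsimps vs_def vec_eq_iff sum_subtractf algebra_simps)

lemma vs_scaleR: "vs f (r *\<^sub>R c) = fscale (of_real r) (vs f c)"
proof -
  have comp: "(r *\<^sub>R c)$i = of_real r * c$i" for i
    by (subst vector_scaleR_component) (simp add: scaleR_conv_of_real)
  show ?thesis by (rule ext) (simp add: fsimps vs_def vec_eq_iff sum_distrib_left algebra_simps; simp add: scaleR_conv_of_real)
qed

lemma vs_zero: "vs f 0 = (\<lambda>w. 0)"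
  by (rule ext) (simp add: vs_def)

context hs begin

lemma vs_R: assumes f: "\<forall>i. f i \<in> R"
  shows "vs f c \<in> R \<and> hnorm ip (vs f c) \<le> norm c * (\<Sum>i\<in>UNIV. hnorm ip (f i))"
proof -
  have h: "vs f c \<in> R \<and> hnorm ip (vs f c) \<le> (\<Sum>i\<in>UNIV. cmod (c$i) * hnorm ip (f i))"
    unfolding vs_def using hn_sum[of UNIV f "\<lambda>i. c$i"] f by simp
  have "(\<Sum>i\<in>UNIV. cmod (c$i) * hnorm ip (f i)) \<le> (\<Sum>i\<in>UNIV. norm c * hnorm ip (f i))"
  proof (rule sum_mono)
    fix i show "cmod (c$i) * hnorm ip (f i) \<le> norm c * hnorm ip (f i)"
    proof (rule mult_right_mono)
      show "cmod (c$i) \<le> norm c" by (rule Finite_Cartesian_Product.norm_nth_le)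
      show "0 \<le> hnorm ip (f i)" using f hn_nonneg by simp
    qed
  qed
  also have "\<dots> = norm c * (\<Sum>i\<in>UNIV. hnorm ip (f i))" by (simp add: sum_distrib_left)
  finally show ?thesis using h by simp
qed

lemma Msum_nonneg: "\<forall>i. f i \<in> R \<Longrightarrow> 0 \<le> (\<Sum>i\<in>UNIV. hnorm ip (f i))"
  by (intro sum_nonneg hn_nonneg) auto

lemma norm_equiv:
  assumes S: "subsp R S" and f: "\<forall>i. f i \<in> R"
    and ind: "\<And>c. vs f c \<in> hclosure R ip S \<Longrightarrow> c = 0"
  shows "\<exists>\<mu>>0. \<forall>c. \<mu> * norm c \<le> qnorm ip (hclosure R ip S) (vs f c)"
proof -
  define L where "L = hclosure R ip S"
  have L: "subsp R L" unfolding L_def by (rule hcl_subsp[OF S])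
  define N where "N c = qnorm ip L (vs f c)" for c
  define M where "M = (\<Sum>i\<in>UNIV. hnorm ip (f i))"
  have M0: "M \<ge> 0" unfolding M_def using Msum_nonneg[OF f] .
  have vR: "vs f c \<in> R" for c using vs_R[OF f] by blast
  have lip1: "N c \<le> N d + M * norm (c - d)" for c d
  proof -
    have "N c \<le> N d + hnorm ip (fsub (vs f c) (vs f d))" unfolding N_def by (rule q_lip[OF L vR vR])
    also have "hnorm ip (fsub (vs f c) (vs f d)) \<le> norm (c - d) * M"
      unfolding vs_diff M_def using vs_R[OF f] by blast
    finally show ?thesis by (simp add: mult.commute)
  qed
  have "M-lipschitz_on (sphere 0 1) N"
  proof (rule lipschitz_onI[OF _ M0])
    fix x y :: "complex^'m"
    have "N x \<le> N y + M * norm (x - y)" "N y \<le> N x + M * norm (y - x)" using lip1 by auto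
    then show "dist (N x) (N y) \<le> M * dist x y"
      by (simp add: dist_norm norm_minus_commute abs_le_iff)
  qed
  then have cont: "continuous_on (sphere 0 1) N" by (rule lipschitz_on_continuous_on)
  have ne: "sphere (0::complex^'m) 1 \<noteq> {}" by simp
  obtain u where u: "u \<in> sphere 0 1" "\<forall>y\<in>sphere 0 1. N u \<le> N y"
    using continuous_attains_inf[OF compact_sphere ne cont] by blast
  have nu: "norm u = 1" using u(1) by simp
  have pos: "N u > 0"
  proof (rule ccontr)
    assume "\<not> N u > 0"
    then have "qnorm ip (hclosure R ip S) (vs f u) \<le> 0" unfolding N_def L_def by simp
    then have "vs f u \<in> hclosure R ip S" by (rule q_zero[OF S vR])
    then have "u = 0" by (rule ind)
    then show False using nu by simp
  qed
  have "N u * norm c \<le> N c" for c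
  proof (cases "c = 0")
    case True then show ?thesis using q_nonneg[OF L vR] unfolding N_def by simp
  next
    case False
    then have nc: "norm c > 0" by simp
    let ?u = "(1 / norm c) *\<^sub>R c"
    have "?u \<in> sphere 0 1" using nc by (simp add: norm_scaleR)
    then have "N u \<le> N ?u" using u by blast
    also have "N ?u \<le> cmod (of_real (1 / norm c)) * N c"
      unfolding N_def vs_scaleR by (rule q_scale[OF L vR])
    also have "\<dots> = N c / norm c" using nc by (simp add: norm_divide)
    finally show ?thesis using nc by (simp add: field_simps)
  qed
  then show ?thesis using pos unfolding N_def L_def by (auto simp: mult.commute)
qed

end



lemma core:
  assumes H: "hs R ip" and H': "hs R' ip'" and S: "subsp R S" and S': "subsp R' S'"
    and f: "\<forall>i. f i \<in> R" and g: "\<forall>i. g i \<in> R'"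
    and mu: "\<mu> > 0" "\<forall>c. \<mu> * norm c \<le> qnorm ip (hclosure R ip S) (vs f c)"
    and M: "M \<ge> 0" "\<forall>c. hnorm ip' (vs g c) \<le> norm c * M"
    and h: "h \<in> R" and k: "k \<in> R'" and a: "fsub h (vs f a) \<in> hclosure R ip S"
    and approx: "\<And>e. e > 0 \<Longrightarrow> \<exists>F G c. F \<in> R \<and> G \<in> R' \<and> hnorm ip (fsub h F) < e \<and> hnorm ip' (fsub k G) < e
        \<and> fsub F (vs f c) \<in> hclosure R ip S \<and> fsub G (vs g c) \<in> hclosure R' ip' S'"
  shows "fsub k (vs g a) \<in> hclosure R' ip' S'"
proof -
  interpret A: hs R ip by fact
  interpret B: hs R' ip' by fact
  define L where "L = hclosure R ip S"
  define L' where "L' = hclosure R' ip' S'"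
  have L: "subsp R L" unfolding L_def by (rule A.hcl_subsp[OF S])
  have L': "subsp R' L'" unfolding L'_def by (rule B.hcl_subsp[OF S'])
  have vf: "vs f c \<in> R" for c using A.vs_R[OF f] by blast
  have vg: "vs g c \<in> R'" for c using B.vs_R[OF g] by blast
  define x where "x = fsub k (vs g a)"
  have xR: "x \<in> R'" unfolding x_def using B.sub[OF k vg] .
  define K where "K = 1 + M / \<mu>"
  have K: "K > 0" unfolding K_def using M mu by (simp add: add_pos_nonneg)
  have bound: "qnorm ip' L' x < e * K" if e: "e > 0" for e
  proof -
    obtain F G c where FG: "F \<in> R" "G \<in> R'" "hnorm ip (fsub h F) < e" "hnorm ip' (fsub k G) < e"
        "fsub F (vs f c) \<in> L" "fsub G (vs g c) \<in> L'"
      using approx[OF e] unfolding L_def L'_def by blast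
    have E1: "fsub (vs f (c - a)) (fsub F h) = fadd (fsub h (vs f a)) (fscale (-1) (fsub F (vs f c)))"
      by (rule ext) (simp add: fsimps vs_def vec_eq_iff sum_subtractf algebra_simps)
    have "fsub (vs f (c - a)) (fsub F h) \<in> L"
      unfolding E1 using L a FG(5) unfolding L_def subsp_def by blast
    then have "qnorm ip L (vs f (c - a)) = qnorm ip L (fsub F h)"
      by (rule A.q_shift[OF L vf A.sub[OF FG(1) h]])
    also have "\<dots> \<le> hnorm ip (fsub F h)" by (rule A.q_le0[OF L A.sub[OF FG(1) h]])
    also have "\<dots> = hnorm ip (fsub h F)" by (rule A.hn_symm[OF FG(1) h])
    finally have "\<mu> * norm (c - a) < e" using mu(2) FG(3) unfolding L_def by (meson order.strict_trans1)
    then have nca: "norm (c - a) < e / \<mu>" using mu(1) by (simp add: field_simps)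
    define y where "y = fadd (fsub k G) (vs g (c - a))"
    have yR: "y \<in> R'" unfolding y_def using B.ad[OF B.sub[OF k FG(2)] vg] .
    have E2: "fsub x y = fsub G (vs g c)" unfolding x_def y_def
      by (rule ext) (simp add: fsimps vs_def vec_eq_iff sum_subtractf algebra_simps)
    have "qnorm ip' L' x = qnorm ip' L' y" by (rule B.q_shift[OF L' xR yR]) (simp add: E2 FG(6))
    also have "\<dots> \<le> hnorm ip' y" by (rule B.q_le0[OF L' yR])
    also have "\<dots> \<le> hnorm ip' (fsub k G) + hnorm ip' (vs g (c - a))"
      unfolding y_def by (rule B.tri[OF B.sub[OF k FG(2)] vg])
    also have "\<dots> < e + (e / \<mu>) * M"
    proof -
      have "hnorm ip' (vs g (c - a)) \<le> norm (c - a) * M" using M(2) by blast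
      also have "\<dots> \<le> (e / \<mu>) * M" using nca M(1) by (intro mult_right_mono) auto
      finally show ?thesis using FG(4) by linarith
    qed
    also have "\<dots> = e * K" unfolding K_def by (simp add: field_simps)
    finally show ?thesis .
  qed
  have "qnorm ip' L' x \<le> 0"
  proof (rule ccontr)
    assume "\<not> qnorm ip' L' x \<le> 0"
    then have q: "qnorm ip' L' x > 0" by simp
    have "qnorm ip' L' x < (qnorm ip' L' x / K) * K" using bound[of "qnorm ip' L' x / K"] q K by simp
    then show False using K by simp
  qed
  then show ?thesis unfolding x_def[symmetric] using B.q_zero[OF S' xR] unfolding L'_def by blast
qed




lemma qf_van: "quasi_free \<Omega> R ip \<Longrightarrow> F \<in> R \<Longrightarrow> w \<notin> \<Omega> \<Longrightarrow> F w = 0"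
proof -
  assume "quasi_free \<Omega> R ip" "F \<in> R" "w \<notin> \<Omega>"
  moreover have "quasi_free \<Omega> R ip \<Longrightarrow> (\<forall>F\<in>R. \<forall>w. w \<notin> \<Omega> \<longrightarrow> F w = 0)"
    unfolding quasi_free_def by (elim conjE) assumption
  ultimately show ?thesis by simp
qed

lemma qf_mul: "quasi_free \<Omega> R ip \<Longrightarrow> \<phi> \<in> AOm \<Omega> \<Longrightarrow> F \<in> R \<Longrightarrow> fmul \<phi> F \<in> R"
proof -
  assume "quasi_free \<Omega> R ip" "\<phi> \<in> AOm \<Omega>" "F \<in> R"
  moreover have "quasi_free \<Omega> R ip \<Longrightarrow> (\<forall>\<phi>\<in>AOm \<Omega>. \<forall>F\<in>R. fmul \<phi> F \<in> R \<and> hnorm ip (fmul \<phi> F) \<le> supnorm \<Omega> \<phi> * hnorm ip F)"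
    unfolding quasi_free_def by (elim conjE) assumption
  ultimately show ?thesis by simp
qed

lemma qf_hs: assumes q: "quasi_free \<Omega> R ip" shows "hs R ip"
proof -
  have "(\<lambda>w. 0) \<in> R \<and> (\<forall>F\<in>R. \<forall>G\<in>R. fadd F G \<in> R) \<and> (\<forall>c. \<forall>F\<in>R. fscale c F \<in> R) \<and>
     (\<forall>F\<in>R. \<forall>G\<in>R. \<forall>H\<in>R. ip (fadd F G) H = ip F H + ip G H) \<and>
     (\<forall>c. \<forall>F\<in>R. \<forall>G\<in>R. ip (fscale c F) G = c * ip F G) \<and>
     (\<forall>F\<in>R. \<forall>G\<in>R. ip G F = cnj (ip F G)) \<and>
     (\<forall>F\<in>R. Im (ip F F) = 0 \<and> Re (ip F F) \<ge> 0)"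
    using q unfolding quasi_free_def by (elim conjE) (intro conjI; assumption)
  then show ?thesis by unfold_locales blast+
qed

lemma AOm_shift: assumes p: "\<phi> \<in> AOm \<Omega>"
  shows "(\<lambda>w. \<phi> w - a * (if w \<in> \<Omega> then 1 else 0)) \<in> AOm \<Omega>"
proof -
  have van: "\<forall>w. w \<notin> \<Omega> \<longrightarrow> \<phi> w = 0" using p by (simp add: AOm_def)
  have "\<exists>U g. open U \<and> closure \<Omega> \<subseteq> U \<and> hol_on U g \<and>
                  (\<forall>w\<in>\<Omega>. cmod ((\<phi> w - a * (if w \<in> \<Omega> then 1 else 0)) - g w) \<le> e)" if e: "e > 0" for e
  proof -
    obtain U g where Ug: "open U" "closure \<Omega> \<subseteq> U" "hol_on U g" "\<forall>w\<in>\<Omega>. cmod (\<phi> w - g w) \<le> e"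
      using p e unfolding AOm_def by blast
    have "hol_on U (\<lambda>w. g w - a)"
      unfolding hol_on_def
    proof (intro conjI ballI)
      show "open U" by fact
      fix x assume "x \<in> U"
      then obtain L where L: "(g has_derivative L) (at x)" "\<forall>c x. L (c *s x) = c * L x"
        using Ug(3) unfolding hol_on_def by blast
      have "((\<lambda>w. g w - a) has_derivative (\<lambda>h. L h - 0)) (at x)"
        by (intro has_derivative_diff L(1) has_derivative_const)
      then show "\<exists>L. ((\<lambda>w. g w - a) has_derivative L) (at x) \<and> (\<forall>c x. L (c *s x) = c * L x)"
        using L(2) by (intro exI[of _ L]) simp
    qed
    moreover have "\<forall>w\<in>\<Omega>. cmod ((\<phi> w - a * (if w \<in> \<Omega> then 1 else 0)) - (g w - a)) \<le> e"
      using Ug(4) by simp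
    ultimately show ?thesis using Ug(1,2) by blast
  qed
  then show ?thesis using van unfolding AOm_def by simp
qed

lemma AOm_ind: "(\<lambda>w. if w \<in> \<Omega> then 1 else 0) \<in> AOm \<Omega>"
proof -
  have "hol_on UNIV (\<lambda>w::complex^'n. 1::complex)"
    unfolding hol_on_def by (intro conjI ballI exI[of _ "\<lambda>h. 0"]) (auto intro: has_derivative_const)
  then show ?thesis unfolding AOm_def
    by (auto intro!: exI[of _ UNIV] exI[of _ "\<lambda>w::complex^'n. 1::complex"])
qed

definition pspc where
  "pspc P V \<longleftrightarrow> P \<subseteq> V \<and> ((\<lambda>w. 0), (\<lambda>w. 0)) \<in> V
                  \<and> (\<forall>(F,G)\<in>V. \<forall>(F',G')\<in>V. (fadd F F', fadd G G') \<in> V)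
                  \<and> (\<forall>c. \<forall>(F,G)\<in>V. (fscale c F, fscale c G) \<in> V)"

lemma pspan_iff: "x \<in> pspan P \<longleftrightarrow> (\<forall>V. pspc P V \<longrightarrow> x \<in> V)"
  unfolding pspan_def pspc_def by simp

lemma pspan_sub: "pspc P V \<Longrightarrow> pspan P \<subseteq> V"
  using pspan_iff by blast

lemma pspan_gen: "x \<in> P \<Longrightarrow> x \<in> pspan P"
  unfolding pspan_iff pspc_def by blast

lemma pspan_zero: "((\<lambda>w. 0), (\<lambda>w. 0)) \<in> pspan P"
  unfolding pspan_iff pspc_def by blast

lemma pspan_add: "(F,G) \<in> pspan P \<Longrightarrow> (F',G') \<in> pspan P \<Longrightarrow> (fadd F F', fadd G G') \<in> pspan P"
  unfolding pspan_iff
proof (intro allI impI)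
  fix V assume a: "\<forall>V. pspc P V \<longrightarrow> (F, G) \<in> V" "\<forall>V. pspc P V \<longrightarrow> (F', G') \<in> V" and V: "pspc P V"
  then have "(F,G) \<in> V" "(F',G') \<in> V" by auto
  then show "(fadd F F', fadd G G') \<in> V" using V unfolding pspc_def by fast
qed

lemma pspan_scale: "(F,G) \<in> pspan P \<Longrightarrow> (fscale c F, fscale c G) \<in> pspan P"
  unfolding pspan_iff
proof (intro allI impI)
  fix V assume a: "\<forall>V. pspc P V \<longrightarrow> (F, G) \<in> V" and V: "pspc P V"
  then have "(F,G) \<in> V" by auto
  then show "(fscale c F, fscale c G) \<in> V" using V unfolding pspc_def by fast
qed




lemma vs_axis: "vs f (\<chi> j. if j = i then a else 0) = fscale a (f i)"
proof -
  have "(\<Sum>j\<in>UNIV. (\<chi> j. if j = i then a else 0) $ j *s f j w) = a *s f i w" for w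
  proof -
    have "(\<Sum>j\<in>UNIV. (\<chi> j. if j = i then a else 0) $ j *s f j w) = (\<Sum>j\<in>UNIV. if j = i then a *s f j w else 0)"
      by (intro sum.cong) auto
    also have "\<dots> = a *s f i w" by simp
    finally show ?thesis .
  qed
  then show ?thesis by (intro ext) (simp add: vs_def fsimps)
qed

lemma vs_add: "fsub (fadd F F') (vs f (c + c')) = fadd (fsub F (vs f c)) (fsub F' (vs f c'))"
  by (rule ext) (simp add: fsimps vs_def vec_eq_iff sum.distrib algebra_simps)

lemma vs_smul: "fsub (fscale a F) (vs f (a *s c)) = fscale a (fsub F (vs f c))"
  by (rule ext) (simp add: fsimps vs_def vec_eq_iff sum_distrib_left algebra_simps)

lemma vs_pspan: assumes "\<forall>i. (f i, g i) \<in> pspan P" shows "(vs f c, vs g c) \<in> pspan P"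
proof -
  have "finite A \<Longrightarrow> ((\<lambda>w. \<Sum>i\<in>A. c$i *s f i w), (\<lambda>w. \<Sum>i\<in>A. c$i *s g i w)) \<in> pspan P" for A
  proof (induction A rule: finite_induct)
    case empty then show ?case using pspan_zero by simp
  next
    case (insert a A)
    have e1: "(\<lambda>w. \<Sum>i\<in>insert a A. c$i *s f i w) = fadd (fscale (c$a) (f a)) (\<lambda>w. \<Sum>i\<in>A. c$i *s f i w)"
      using insert by (intro ext) (simp add: fsimps)
    have e2: "(\<lambda>w. \<Sum>i\<in>insert a A. c$i *s g i w) = fadd (fscale (c$a) (g a)) (\<lambda>w. \<Sum>i\<in>A. c$i *s g i w)"
      using insert by (intro ext) (simp add: fsimps)
    show ?case unfolding e1 e2
      by (rule pspan_add[OF pspan_scale insert.IH]) (use assms in blast)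
  qed
  then show ?thesis unfolding vs_def by simp
qed




lemma gen_parts: assumes "gen_set \<Omega> R ip f" "z \<in> \<Omega>"
  shows "\<forall>i. f i \<in> R"
    "\<forall>h\<in>R. \<exists>c. fsub h (\<lambda>w. \<Sum>i\<in>UNIV. c i *s f i w) \<in> locsub \<Omega> R ip z"
    "\<forall>c. (\<lambda>w. \<Sum>i\<in>UNIV. c i *s f i w) \<in> locsub \<Omega> R ip z \<longrightarrow> (\<forall>i. c i = 0)"
proof -
  have 1: "(\<forall>i. f i \<in> R) \<and> (\<forall>z\<in>\<Omega>.
        (\<forall>h\<in>R. \<exists>c. fsub h (\<lambda>w. \<Sum>i\<in>UNIV. c i *s f i w) \<in> locsub \<Omega> R ip z) \<and>
        (\<forall>c. (\<lambda>w. \<Sum>i\<in>UNIV. c i *s f i w) \<in> locsub \<Omega> R ip z \<longrightarrow> (\<forall>i. c i = 0)))"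
    using assms(1) unfolding gen_set_def by (elim conjE) (intro conjI; assumption)
  then show "\<forall>i. f i \<in> R" by (elim conjE)
  show "\<forall>h\<in>R. \<exists>c. fsub h (\<lambda>w. \<Sum>i\<in>UNIV. c i *s f i w) \<in> locsub \<Omega> R ip z"
    using 1 assms(2) by blast
  show "\<forall>c. (\<lambda>w. \<Sum>i\<in>UNIV. c i *s f i w) \<in> locsub \<Omega> R ip z \<longrightarrow> (\<forall>i. c i = 0)"
    using 1 assms(2) by blast
qed

lemma side_setup:
  assumes q: "quasi_free \<Omega> R ip" and gs: "gen_set \<Omega> R ip f" and zO: "z \<in> \<Omega>"
  shows "\<exists>S. subsp R S \<and> locsub \<Omega> R ip z = hclosure R ip S \<and>
     {fmul \<phi> F | \<phi> F. \<phi> \<in> AOm \<Omega> \<and> \<phi> z = 0 \<and> F \<in> R} \<subseteq> S \<and>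
     (\<forall>h\<in>R. \<exists>a. fsub h (vs f a) \<in> locsub \<Omega> R ip z) \<and>
     (\<forall>c. vs f c \<in> locsub \<Omega> R ip z \<longrightarrow> c = 0) \<and>
     (\<exists>\<mu>>0. \<forall>c. \<mu> * norm c \<le> qnorm ip (locsub \<Omega> R ip z) (vs f c))"
proof -
  interpret A: hs R ip by (rule qf_hs[OF q])
  have f: "\<forall>i. f i \<in> R" using gen_parts[OF gs zO] by blast
  define S0 where "S0 = {fmul \<phi> F | \<phi> F. \<phi> \<in> AOm \<Omega> \<and> \<phi> z = 0 \<and> F \<in> R}"
  have S0R: "S0 \<subseteq> R" using qf_mul[OF q] unfolding S0_def by blast
  define S where "S = fspan S0"
  have S: "subsp R S" and S0S: "S0 \<subseteq> S" using A.span_subsp[OF S0R] unfolding S_def by auto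
  have Ldef: "locsub \<Omega> R ip z = hclosure R ip S" unfolding locsub_def S_def S0_def by simp
  have ex: "\<forall>h\<in>R. \<exists>a. fsub h (vs f a) \<in> locsub \<Omega> R ip z"
  proof
    fix h assume "h \<in> R"
    then obtain c where c: "fsub h (\<lambda>w. \<Sum>i\<in>UNIV. c i *s f i w) \<in> locsub \<Omega> R ip z"
      using gen_parts(2)[OF gs zO] by blast
    have "vs f (\<chi> i. c i) = (\<lambda>w. \<Sum>i\<in>UNIV. c i *s f i w)" by (simp add: vs_def)
    then show "\<exists>a. fsub h (vs f a) \<in> locsub \<Omega> R ip z" using c by metis
  qed
  have ind: "\<forall>c. vs f c \<in> locsub \<Omega> R ip z \<longrightarrow> c = 0"
  proof (intro allI impI)
    fix c assume "vs f c \<in> locsub \<Omega> R ip z"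
    then have "(\<lambda>w. \<Sum>i\<in>UNIV. c$i *s f i w) \<in> locsub \<Omega> R ip z" by (simp add: vs_def)
    then have "\<forall>i. c$i = 0" using gen_parts(3)[OF gs zO] by blast
    then show "c = 0" by (simp add: vec_eq_iff)
  qed
  have "\<exists>\<mu>>0. \<forall>c. \<mu> * norm c \<le> qnorm ip (hclosure R ip S) (vs f c)"
    by (rule A.norm_equiv[OF S f]) (use ind Ldef in auto)
  then show ?thesis using S Ldef S0S ex ind unfolding S0_def by (intro exI[of _ S]) auto
qed




theorem lemma2:
  fixes \<Omega> :: "(complex^'n) set"
    and R R' :: "(complex^'n \<Rightarrow> complex^'m::finite) set"
    and ip ip' :: "(complex^'n \<Rightarrow> complex^'m) \<Rightarrow> (complex^'n \<Rightarrow> complex^'m) \<Rightarrow> complex"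
    and f g :: "'m \<Rightarrow> (complex^'n \<Rightarrow> complex^'m)"
    and z :: "complex^'n"
  assumes "open \<Omega>" "connected \<Omega>" "bounded \<Omega>" "\<Omega> \<noteq> {}"
    and "quasi_free \<Omega> R ip" "quasi_free \<Omega> R' ip'"
    and "gen_set \<Omega> R ip f" "gen_set \<Omega> R' ip' g"
    and "z \<in> \<Omega>"
  shows
    "(\<forall>(h,k)\<in>delta_graph \<Omega> R ip R' ip' f g. \<forall>(h',k')\<in>delta_graph \<Omega> R ip R' ip' f g.
        fsub h h' \<in> locsub \<Omega> R ip z \<longrightarrow> fsub k k' \<in> locsub \<Omega> R' ip' z)
   \<and> (\<forall>h\<in>R. \<exists>(h0,k)\<in>delta_graph \<Omega> R ip R' ip' f g. fsub h0 h \<in> locsub \<Omega> R ip z)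
   \<and> (\<forall>(h,k)\<in>delta_graph \<Omega> R ip R' ip' f g. \<forall>(h',k')\<in>delta_graph \<Omega> R ip R' ip' f g.
        fsub k k' \<in> locsub \<Omega> R' ip' z \<longrightarrow> fsub h h' \<in> locsub \<Omega> R ip z)
   \<and> (\<forall>k\<in>R'. \<exists>(h,k0)\<in>delta_graph \<Omega> R ip R' ip' f g. fsub k0 k \<in> locsub \<Omega> R' ip' z)
   \<and> (\<exists>C. \<forall>(h,k)\<in>delta_graph \<Omega> R ip R' ip' f g.
        qnorm ip' (locsub \<Omega> R' ip' z) k \<le> C * qnorm ip (locsub \<Omega> R ip z) h)
   \<and> (\<exists>C. \<forall>(h,k)\<in>delta_graph \<Omega> R ip R' ip' f g.
        qnorm ip (locsub \<Omega> R ip z) h \<le> C * qnorm ip' (locsub \<Omega> R' ip' z) k)"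
proof -
  note q = assms(5) and q' = assms(6) and zO = assms(9)
  have HR: "hs R ip" by (rule qf_hs[OF q])
  have HR': "hs R' ip'" by (rule qf_hs[OF q'])
  interpret A: hs R ip by (rule HR)
  interpret B: hs R' ip' by (rule HR')
  have f: "\<forall>i. f i \<in> R" using gen_parts[OF assms(7) zO] by blast
  have g: "\<forall>i. g i \<in> R'" using gen_parts[OF assms(8) zO] by blast
  define L where "L = locsub \<Omega> R ip z"
  define L' where "L' = locsub \<Omega> R' ip' z"
  obtain S where S: "subsp R S" and Ldef: "L = hclosure R ip S"
    and S0S: "{fmul \<phi> F | \<phi> F. \<phi> \<in> AOm \<Omega> \<and> \<phi> z = 0 \<and> F \<in> R} \<subseteq> S"
    and exf: "\<forall>h\<in>R. \<exists>a. fsub h (vs f a) \<in> L"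
    and indf: "\<forall>c. vs f c \<in> L \<longrightarrow> c = 0"
    and muf: "\<exists>\<mu>>0. \<forall>c. \<mu> * norm c \<le> qnorm ip L (vs f c)"
    using side_setup[OF q assms(7) zO] unfolding L_def by blast
  obtain S' where S': "subsp R' S'" and L'def: "L' = hclosure R' ip' S'"
    and S0S': "{fmul \<phi> F | \<phi> F. \<phi> \<in> AOm \<Omega> \<and> \<phi> z = 0 \<and> F \<in> R'} \<subseteq> S'"
    and exg: "\<forall>k\<in>R'. \<exists>a. fsub k (vs g a) \<in> L'"
    and indg: "\<forall>c. vs g c \<in> L' \<longrightarrow> c = 0"
    and mug: "\<exists>\<mu>>0. \<forall>c. \<mu> * norm c \<le> qnorm ip' L' (vs g c)"
    using side_setup[OF q' assms(8) zO] unfolding L'_def by blast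
  obtain \<mu> where mu: "\<mu> > 0" "\<forall>c. \<mu> * norm c \<le> qnorm ip L (vs f c)" using muf by blast
  obtain \<mu>' where mu': "\<mu>' > 0" "\<forall>c. \<mu>' * norm c \<le> qnorm ip' L' (vs g c)" using mug by blast
  have L: "subsp R L" unfolding Ldef by (rule A.hcl_subsp[OF S])
  have L': "subsp R' L'" unfolding L'def by (rule B.hcl_subsp[OF S'])
  have SL: "S \<subseteq> L" unfolding Ldef by (rule A.hcl_sub[OF S])
  have SL': "S' \<subseteq> L'" unfolding L'def by (rule B.hcl_sub[OF S'])
  define Mf where "Mf = (\<Sum>i\<in>UNIV. hnorm ip (f i))"
  define Mg where "Mg = (\<Sum>i\<in>UNIV. hnorm ip' (g i))"
  have Mf0: "Mf \<ge> 0" unfolding Mf_def by (rule A.Msum_nonneg[OF f])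
  have Mg0: "Mg \<ge> 0" unfolding Mg_def by (rule B.Msum_nonneg[OF g])
  have vf: "vs f c \<in> R" "hnorm ip (vs f c) \<le> norm c * Mf" for c using A.vs_R[OF f] unfolding Mf_def by blast+
  have vg: "vs g c \<in> R'" "hnorm ip' (vs g c) \<le> norm c * Mg" for c using B.vs_R[OF g] unfolding Mg_def by blast+
  have vanf: "f i w = 0" if "w \<notin> \<Omega>" for i w using qf_van[OF q _ that] f by blast
  have vang: "g i w = 0" if "w \<notin> \<Omega>" for i w using qf_van[OF q' _ that] g by blast
  define Gens where "Gens = {(fmul \<phi> (f i), fmul \<phi> (g i)) | \<phi> i. \<phi> \<in> AOm \<Omega>}"
  have DG: "(h,k) \<in> delta_graph \<Omega> R ip R' ip' f g \<longleftrightarrow> h \<in> R \<and> k \<in> R' \<and>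
     (\<forall>\<epsilon>>0. \<exists>(F0,G0)\<in>pspan Gens. sqrt ((hnorm ip (fsub h F0))\<^sup>2 + (hnorm ip' (fsub k G0))\<^sup>2) < \<epsilon>)" for h k
    unfolding delta_graph_def Gens_def by simp
  define V where "V = {(F,G). F \<in> R \<and> G \<in> R' \<and> (\<exists>c. fsub F (vs f c) \<in> S \<and> fsub G (vs g c) \<in> S')}"
  have VI: "(F,G) \<in> V" if "F \<in> R" "G \<in> R'" "fsub F (vs f c) \<in> S" "fsub G (vs g c) \<in> S'" for F G c
    unfolding V_def using that by blast
  have VD: "F \<in> R \<and> G \<in> R' \<and> (\<exists>c. fsub F (vs f c) \<in> S \<and> fsub G (vs g c) \<in> S')" if "(F,G) \<in> V" for F G
    using that unfolding V_def by blast
  have "pspc Gens V"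
    unfolding pspc_def
  proof (intro conjI)
    show "Gens \<subseteq> V"
    proof
      fix p assume "p \<in> Gens"
      then obtain \<phi> i where p: "p = (fmul \<phi> (f i), fmul \<phi> (g i))" "\<phi> \<in> AOm \<Omega>" unfolding Gens_def by blast
      define \<psi> where "\<psi> = (\<lambda>w. \<phi> w - \<phi> z * (if w \<in> \<Omega> then 1 else 0))"
      have \<psi>A: "\<psi> \<in> AOm \<Omega>" unfolding \<psi>_def by (rule AOm_shift[OF p(2)])
      have \<psi>z: "\<psi> z = 0" unfolding \<psi>_def using zO by simp
      define c where "c = (\<chi> j. if j = i then \<phi> z else (0::complex))"
      have e1: "fsub (fmul \<phi> (f i)) (vs f c) = fmul \<psi> (f i)"
        unfolding c_def vs_axis
      proof (rule ext)
        fix w show "fsub (fmul \<phi> (f i)) (fscale (\<phi> z) (f i)) w = fmul \<psi> (f i) w"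
          using vanf[of w i] by (cases "w \<in> \<Omega>") (simp_all add: fsimps \<psi>_def)
      qed
      have e2: "fsub (fmul \<phi> (g i)) (vs g c) = fmul \<psi> (g i)"
        unfolding c_def vs_axis
      proof (rule ext)
        fix w show "fsub (fmul \<phi> (g i)) (fscale (\<phi> z) (g i)) w = fmul \<psi> (g i) w"
          using vang[of w i] by (cases "w \<in> \<Omega>") (simp_all add: fsimps \<psi>_def)
      qed
      have "fmul \<psi> (f i) \<in> S" using S0S \<psi>A \<psi>z f by blast
      moreover have "fmul \<psi> (g i) \<in> S'" using S0S' \<psi>A \<psi>z g by blast
      moreover have "fmul \<phi> (f i) \<in> R" using qf_mul[OF q p(2)] f by blast
      moreover have "fmul \<phi> (g i) \<in> R'" using qf_mul[OF q' p(2)] g by blast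
      ultimately show "p \<in> V" unfolding p(1) using VI e1 e2 by metis
    qed
    show "((\<lambda>w. 0), (\<lambda>w. 0)) \<in> V"
    proof (rule VI[where c=0])
      have e: "fsub (\<lambda>w. 0) (vs h 0) = (\<lambda>w. 0)" for h :: "'m \<Rightarrow> complex^'n \<Rightarrow> complex^'m"
        by (rule ext) (simp add: fsimps vs_zero)
      show "(\<lambda>w. 0) \<in> R" by (rule A.z)
      show "(\<lambda>w. 0) \<in> R'" by (rule B.z)
      show "fsub (\<lambda>w. 0) (vs f 0) \<in> S" using S unfolding e subsp_def by blast
      show "fsub (\<lambda>w. 0) (vs g 0) \<in> S'" using S' unfolding e subsp_def by blast
    qed
    have add: "(fadd F F', fadd G G') \<in> V" if FG: "(F,G) \<in> V" "(F',G') \<in> V" for F G F' G'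
    proof -
      obtain c where c: "F \<in> R" "G \<in> R'" "fsub F (vs f c) \<in> S" "fsub G (vs g c) \<in> S'" using VD[OF FG(1)] by blast
      obtain c' where c': "F' \<in> R" "G' \<in> R'" "fsub F' (vs f c') \<in> S" "fsub G' (vs g c') \<in> S'" using VD[OF FG(2)] by blast
      show ?thesis
      proof (rule VI[where c="c + c'"])
        show "fadd F F' \<in> R" using c c' A.ad by blast
        show "fadd G G' \<in> R'" using c c' B.ad by blast
        show "fsub (fadd F F') (vs f (c + c')) \<in> S" unfolding vs_add using S c c' unfolding subsp_def by blast
        show "fsub (fadd G G') (vs g (c + c')) \<in> S'" unfolding vs_add using S' c c' unfolding subsp_def by blast
      qed
    qed
    then show "\<forall>(F,G)\<in>V. \<forall>(F',G')\<in>V. (fadd F F', fadd G G') \<in> V" by auto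
    have scl: "(fscale a F, fscale a G) \<in> V" if FG: "(F,G) \<in> V" for F G a
    proof -
      obtain c where c: "F \<in> R" "G \<in> R'" "fsub F (vs f c) \<in> S" "fsub G (vs g c) \<in> S'" using VD[OF FG(1)] by blast
      show ?thesis
      proof (rule VI[where c="a *s c"])
        show "fscale a F \<in> R" using c A.sc by blast
        show "fscale a G \<in> R'" using c B.sc by blast
        show "fsub (fscale a F) (vs f (a *s c)) \<in> S" unfolding vs_smul using S c unfolding subsp_def by blast
        show "fsub (fscale a G) (vs g (a *s c)) \<in> S'" unfolding vs_smul using S' c unfolding subsp_def by blast
      qed
    qed
    then show "\<forall>c. \<forall>(F,G)\<in>V. (fscale c F, fscale c G) \<in> V" by auto
  qed
  then have rep: "pspan Gens \<subseteq> V" by (rule pspan_sub)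
  have gen1: "(f i, g i) \<in> pspan Gens" for i
  proof -
    have "(fmul (\<lambda>w. if w \<in> \<Omega> then 1 else 0) (f i), fmul (\<lambda>w. if w \<in> \<Omega> then 1 else 0) (g i)) \<in> Gens"
      unfolding Gens_def using AOm_ind by blast
    moreover have "fmul (\<lambda>w. if w \<in> \<Omega> then 1 else 0) (f i) = f i"
      by (rule ext) (simp add: fsimps vanf)
    moreover have "fmul (\<lambda>w. if w \<in> \<Omega> then 1 else 0) (g i) = g i"
      by (rule ext) (simp add: fsimps vang)
    ultimately show ?thesis using pspan_gen by metis
  qed
  have psum: "(vs f c, vs g c) \<in> pspan Gens" for c by (rule vs_pspan) (use gen1 in blast)
  have inDG: "(vs f c, vs g c) \<in> delta_graph \<Omega> R ip R' ip' f g" for c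
  proof -
    have e: "fsub x x = (\<lambda>w. 0)" for x :: "complex^'n \<Rightarrow> complex^'m" by (rule ext) (simp add: fsimps)
    show ?thesis unfolding DG using vf(1) vg(1) psum
      by (auto simp: e A.hn_zero B.hn_zero intro!: bexI[of _ "(vs f c, vs g c)"])
  qed
  have grep: "\<exists>a. fsub h (vs f a) \<in> L \<and> fsub k (vs g a) \<in> L'" if hk: "(h,k) \<in> delta_graph \<Omega> R ip R' ip' f g" for h k
  proof -
    have h: "h \<in> R" and k: "k \<in> R'" using hk unfolding DG by auto
    obtain a where a: "fsub h (vs f a) \<in> L" using exf h by blast
    have approx: "\<exists>F G c. F \<in> R \<and> G \<in> R' \<and> hnorm ip (fsub h F) < e \<and> hnorm ip' (fsub k G) < e
        \<and> fsub F (vs f c) \<in> hclosure R ip S \<and> fsub G (vs g c) \<in> hclosure R' ip' S'" if e: "e > 0" for e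
    proof -
      obtain F0 G0 where FG: "(F0,G0) \<in> pspan Gens" "sqrt ((hnorm ip (fsub h F0))\<^sup>2 + (hnorm ip' (fsub k G0))\<^sup>2) < e"
        using hk e unfolding DG by blast
      obtain c where c: "F0 \<in> R" "G0 \<in> R'" "fsub F0 (vs f c) \<in> S" "fsub G0 (vs g c) \<in> S'"
        using VD[of F0 G0] rep FG(1) by blast
      have "hnorm ip (fsub h F0) < e" using FG(2) real_sqrt_sum_squares_ge1 by (meson order.strict_trans1)
      moreover have "hnorm ip' (fsub k G0) < e" using FG(2) real_sqrt_sum_squares_ge2 by (meson order.strict_trans1)
      ultimately show ?thesis using c SL SL' Ldef L'def by blast
    qed
    have "fsub k (vs g a) \<in> hclosure R' ip' S'"
      by (rule core[OF HR HR' S S' f g mu(1) mu(2)[unfolded Ldef] Mg0 _ h k a[unfolded Ldef] approx])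
         (use vg(2) in blast)
    then show ?thesis using a L'def by blast
  qed
  have P1: "fsub k k' \<in> L'" if hk: "(h,k) \<in> delta_graph \<Omega> R ip R' ip' f g" "(h',k') \<in> delta_graph \<Omega> R ip R' ip' f g"
    "fsub h h' \<in> L" for h k h' k'
  proof -
    have h: "h \<in> R" "k \<in> R'" "h' \<in> R" "k' \<in> R'" using hk unfolding DG by auto
    obtain a where a: "fsub h (vs f a) \<in> L" "fsub k (vs g a) \<in> L'" using grep[OF hk(1)] by blast
    obtain a' where a': "fsub h' (vs f a') \<in> L" "fsub k' (vs g a') \<in> L'" using grep[OF hk(2)] by blast
    have "vs f (a - a') = fadd (fsub (fsub h h') (fsub h (vs f a))) (fsub h' (vs f a'))"
      by (rule ext) (simp add: fsimps vs_def vec_eq_iff sum_subtractf algebra_simps)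
    then have "vs f (a - a') \<in> L" using L hk(3) a(1) a'(1) subsp_sub[OF L] unfolding subsp_def by metis
    then have "a - a' = 0" using indf by blast
    then have "a = a'" by simp
    moreover have "fsub k k' = fsub (fsub k (vs g a)) (fsub k' (vs g a))"
      by (rule ext) (simp add: fsimps)
    ultimately show ?thesis using subsp_sub[OF L' a(2) a'(2)] by simp
  qed
  have P3: "fsub h h' \<in> L" if hk: "(h,k) \<in> delta_graph \<Omega> R ip R' ip' f g" "(h',k') \<in> delta_graph \<Omega> R ip R' ip' f g"
    "fsub k k' \<in> L'" for h k h' k'
  proof -
    obtain a where a: "fsub h (vs f a) \<in> L" "fsub k (vs g a) \<in> L'" using grep[OF hk(1)] by blast
    obtain a' where a': "fsub h' (vs f a') \<in> L" "fsub k' (vs g a') \<in> L'" using grep[OF hk(2)] by blast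
    have "vs g (a - a') = fadd (fsub (fsub k k') (fsub k (vs g a))) (fsub k' (vs g a'))"
      by (rule ext) (simp add: fsimps vs_def vec_eq_iff sum_subtractf algebra_simps)
    then have "vs g (a - a') \<in> L'" using L' hk(3) a(2) a'(2) subsp_sub[OF L'] unfolding subsp_def by metis
    then have "a - a' = 0" using indg by blast
    then have "a = a'" by simp
    moreover have "fsub h h' = fsub (fsub h (vs f a)) (fsub h' (vs f a))"
      by (rule ext) (simp add: fsimps)
    ultimately show ?thesis using subsp_sub[OF L a(1) a'(1)] by simp
  qed
  have P2: "\<exists>(h0,k)\<in>delta_graph \<Omega> R ip R' ip' f g. fsub h0 h \<in> L" if h: "h \<in> R" for h
  proof -
    obtain a where a: "fsub h (vs f a) \<in> L" using exf h by blast
    have "fsub (vs f a) h \<in> L" by (rule subsp_neg[OF L a])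
    then show ?thesis using inDG[of a] by blast
  qed
  have P4: "\<exists>(h,k0)\<in>delta_graph \<Omega> R ip R' ip' f g. fsub k0 k \<in> L'" if k: "k \<in> R'" for k
  proof -
    obtain a where a: "fsub k (vs g a) \<in> L'" using exg k by blast
    have "fsub (vs g a) k \<in> L'" by (rule subsp_neg[OF L' a])
    then show ?thesis using inDG[of a] by blast
  qed
  have P5: "qnorm ip' L' k \<le> (Mg / \<mu>) * qnorm ip L h" if hk: "(h,k) \<in> delta_graph \<Omega> R ip R' ip' f g" for h k
  proof -
    have h: "h \<in> R" "k \<in> R'" using hk unfolding DG by auto
    obtain a where a: "fsub h (vs f a) \<in> L" "fsub k (vs g a) \<in> L'" using grep[OF hk] by blast
    have "qnorm ip' L' k = qnorm ip' L' (vs g a)" by (rule B.q_shift[OF L' h(2) vg(1) a(2)])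
    also have "\<dots> \<le> hnorm ip' (vs g a)" by (rule B.q_le0[OF L' vg(1)])
    also have "\<dots> \<le> norm a * Mg" by (rule vg(2))
    also have "\<dots> \<le> (qnorm ip L h / \<mu>) * Mg"
    proof (rule mult_right_mono[OF _ Mg0])
      have "qnorm ip L h = qnorm ip L (vs f a)" by (rule A.q_shift[OF L h(1) vf(1) a(1)])
      then have "\<mu> * norm a \<le> qnorm ip L h" using mu(2) by simp
      then show "norm a \<le> qnorm ip L h / \<mu>" using mu(1) by (simp add: field_simps)
    qed
    also have "\<dots> = (Mg / \<mu>) * qnorm ip L h" by simp
    finally show ?thesis .
  qed
  have P6: "qnorm ip L h \<le> (Mf / \<mu>') * qnorm ip' L' k" if hk: "(h,k) \<in> delta_graph \<Omega> R ip R' ip' f g" for h k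
  proof -
    have h: "h \<in> R" "k \<in> R'" using hk unfolding DG by auto
    obtain a where a: "fsub h (vs f a) \<in> L" "fsub k (vs g a) \<in> L'" using grep[OF hk] by blast
    have "qnorm ip L h = qnorm ip L (vs f a)" by (rule A.q_shift[OF L h(1) vf(1) a(1)])
    also have "\<dots> \<le> hnorm ip (vs f a)" by (rule A.q_le0[OF L vf(1)])
    also have "\<dots> \<le> norm a * Mf" by (rule vf(2))
    also have "\<dots> \<le> (qnorm ip' L' k / \<mu>') * Mf"
    proof (rule mult_right_mono[OF _ Mf0])
      have "qnorm ip' L' k = qnorm ip' L' (vs g a)" by (rule B.q_shift[OF L' h(2) vg(1) a(2)])
      then have "\<mu>' * norm a \<le> qnorm ip' L' k" using mu'(2) by simp
      then show "norm a \<le> qnorm ip' L' k / \<mu>'" using mu'(1) by (simp add: field_simps)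
    qed
    also have "\<dots> = (Mf / \<mu>') * qnorm ip' L' k" by simp
    finally show ?thesis .
  qed
  show ?thesis unfolding L_def[symmetric] L'_def[symmetric]
  proof (intro conjI)
    show "\<forall>(h,k)\<in>delta_graph \<Omega> R ip R' ip' f g. \<forall>(h',k')\<in>delta_graph \<Omega> R ip R' ip' f g.
        fsub h h' \<in> L \<longrightarrow> fsub k k' \<in> L'" using P1 by auto
    show "\<forall>h\<in>R. \<exists>(h0,k)\<in>delta_graph \<Omega> R ip R' ip' f g. fsub h0 h \<in> L" using P2 by blast
    show "\<forall>(h,k)\<in>delta_graph \<Omega> R ip R' ip' f g. \<forall>(h',k')\<in>delta_graph \<Omega> R ip R' ip' f g.
        fsub k k' \<in> L' \<longrightarrow> fsub h h' \<in> L" using P3 by auto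
    show "\<forall>k\<in>R'. \<exists>(h,k0)\<in>delta_graph \<Omega> R ip R' ip' f g. fsub k0 k \<in> L'" using P4 by blast
    show "\<exists>C. \<forall>(h,k)\<in>delta_graph \<Omega> R ip R' ip' f g. qnorm ip' L' k \<le> C * qnorm ip L h"
      using P5 by (intro exI[of _ "Mg / \<mu>"]) auto
    show "\<exists>C. \<forall>(h,k)\<in>delta_graph \<Omega> R ip R' ip' f g. qnorm ip L h \<le> C * qnorm ip' L' k"
      using P6 by (intro exI[of _ "Mf / \<mu>'"]) auto
  qed
qed


end
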